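(* Fix $M>0$ and consider the following repeated game (Protocol 2) between nature, a forecaster and agents, for $t=1,2,\dots$: (1) nature reveals $x_t\in\mathcal{X}$ and chooses $\mu_t^*\in[0,1]$ without revealing it; (2) the forecaster reveals $\mu_t,c_t$; (3) agent $t$, with loss function $l_t:\mathcal{A}\times\{0,1\}\to\mathbb{R}$, reveals an action $a_t\in\mathcal{A}$ and a stake $b_t\in[-M,M]$; (4) nature samples $y_t\sim\mathrm{Bernoulli}(\mu_t^* )$ and reveals $y_t$; (5) the agent incurs loss $l_t(a_t,y_t)-b_t(y_t-\mu_t)+|b_t|c_t$ and the forecaster incurs loss $b_t(y_t-\mu_t)-|b_t|c_t$. Each player's choice at time $t$ may depend arbitrarily on everything revealed before it, but not on future quantities. Suppose additionally that $b_t\ge 0$ for all $t$. Then there exists an algorithm for the forecaster that outputs $\mu_t$ with $c_t\equiv 0$ and is asymptotically exact for $\mu_t^*,b_t$ generated by any strategy of nature and agents, i.e. $$\limsup_{T\to\infty}\frac1T\sum_{t=1}^T b_t(\mu_t-y_t)=0.$$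
   Context: A sequence of forecasts $(\mu_t,c_t)$ is called asymptotically exact relative to $y_1,b_1,y_2,b_2,\dots$ if $\limsup_{T\to\infty}\frac1T\sum_{t=1}^T b_t(\mu_t-y_t)-|b_t|c_t=0$. *)

theory Defs
  imports "HOL-Analysis.Analysis"
begin

text \<open>Asymptotic exactness of forecasts (mu_t, c_t) relative to y_1,b_1,y_2,b_2,...
  Rounds are indexed from 0, so the sum over t < T is the sum over rounds 1..T.\<close>
definition asymptotically_exact ::
  "(nat \<Rightarrow> real) \<Rightarrow> (nat \<Rightarrow> real) \<Rightarrow> (nat \<Rightarrow> real) \<Rightarrow> (nat \<Rightarrow> real) \<Rightarrow> bool" where
  "asymptotically_exact mu c y b \<longleftrightarrow>
     limsup (\<lambda>T. ereal ((1 / real T) * (\<Sum>t<T. b t * (mu t - y t) - \<bar>b t\<bar> * c t))) = 0"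

text \<open>Public history available to the forecaster before its move in round t:
  the tuples (x_s, a_s, b_s, y_s) of all past rounds s < t (its own past forecasts are
  recomputable from these), together with the current x_t.\<close>
definition history ::
  "(nat \<Rightarrow> 'x) \<Rightarrow> (nat \<Rightarrow> 'a) \<Rightarrow> (nat \<Rightarrow> real) \<Rightarrow> (nat \<Rightarrow> real) \<Rightarrow> nat \<Rightarrow> ('x \<times> 'a \<times> real \<times> real) list" where
  "history x a b y t = map (\<lambda>s. (x s, a s, b s, y s)) [0..<t]"

end

theory Submission
  imports Defs
begin

definition fstep :: "real \<Rightarrow> ('x \<times> 'a \<times> real \<times> real) \<Rightarrow> real" where
  "fstep S e = S + fst (snd (snd e)) * ((if S > 0 then 0 else 1) - snd (snd (snd e)))"

definition fc :: "('x \<times> 'a \<times> real \<times> real) list \<Rightarrow> 'x \<Rightarrow> real" where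
  "fc h xt = (if foldl fstep 0 h > 0 then 0 else 1)"

lemma history_Suc: "history x a b y (Suc t) = history x a b y t @ [(x t, a t, b t, y t)]"
  by (simp add: history_def)

lemma fold_sum:
  "foldl fstep 0 (history x a b y t) = (\<Sum>s<t. b s * (fc (history x a b y s) (x s) - y s))"
proof (induction t)
  case 0 show ?case by (simp add: history_def)
next
  case (Suc t)
  have "foldl fstep 0 (history x a b y (Suc t)) = fstep (foldl fstep 0 (history x a b y t)) (x t, a t, b t, y t)"
    by (simp only: history_Suc foldl_append foldl_Cons foldl_Nil)
  also have "\<dots> = foldl fstep 0 (history x a b y t) + b t * (fc (history x a b y t) (x t) - y t)"
    by (simp only: fstep_def fc_def fst_conv snd_conv)
  finally show ?case using Suc by simp
qed
lemma bound:
  assumes "\<forall>t. y t \<in> {0, 1}" "\<forall>t. 0 \<le> b t \<and> b t \<le> M" "M > 0"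
  shows "\<bar>\<Sum>s<t. b s * (fc (history x a b y s) (x s) - y s)\<bar> \<le> M"
proof (induction t)
  case 0 then show ?case using assms by simp
next
  case (Suc t)
  let ?S = "\<Sum>s<t. b s * (fc (history x a b y s) (x s) - y s)"
  have fcS: "fc (history x a b y t) (x t) = (if ?S > 0 then 0 else 1)"
    by (subst fc_def, subst fold_sum, rule refl)
  have bt: "0 \<le> b t" "b t \<le> M" using assms by auto
  have yt: "y t = 0 \<or> y t = 1" using assms by auto
  have IH: "\<bar>?S\<bar> \<le> M" using Suc .
  have eq: "(\<Sum>s<Suc t. b s * (fc (history x a b y s) (x s) - y s)) = ?S + b t * (fc (history x a b y t) (x t) - y t)"
    by simp
  show ?case
  proof (cases "?S > 0")
    case True
    then have f0: "fc (history x a b y t) (x t) = 0" using fcS by simp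
    have h: "0 \<le> b t * y t" "b t * y t \<le> M"
      using yt bt by auto
    have "b t * (fc (history x a b y t) (x t) - y t) = - (b t * y t)" unfolding f0 by simp
    then show ?thesis unfolding eq abs_le_iff using IH True h by linarith
  next
    case False
    then have f1: "fc (history x a b y t) (x t) = 1" using fcS by simp
    have h: "0 \<le> b t * (1 - y t)" "b t * (1 - y t) \<le> M"
      using yt bt by auto
    have "b t * (fc (history x a b y t) (x t) - y t) = b t * (1 - y t)" unfolding f1 by simp
    then show ?thesis unfolding eq abs_le_iff using IH False h by linarith
  qed
qed

theorem corollary1:
  fixes M :: real
  assumes "M > 0"
  shows "\<exists>F :: ('x \<times> 'a \<times> real \<times> real) list \<Rightarrow> 'x \<Rightarrow> real.
           (\<forall>h xt. 0 \<le> F h xt \<and> F h xt \<le> 1) \<and>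
           (\<forall>(x :: nat \<Rightarrow> 'x) (a :: nat \<Rightarrow> 'a) (b :: nat \<Rightarrow> real) (y :: nat \<Rightarrow> real).
              (\<forall>t. y t \<in> {0, 1}) \<longrightarrow> (\<forall>t. 0 \<le> b t \<and> b t \<le> M) \<longrightarrow>
              asymptotically_exact (\<lambda>t. F (history x a b y t) (x t)) (\<lambda>_. 0) y b)"
proof (intro exI[of _ fc] conjI allI impI)
  fix h :: "('x \<times> 'a \<times> real \<times> real) list" and xt
  show "0 \<le> fc h xt" "fc h xt \<le> 1" by (auto simp: fc_def)
next
  fix x :: "nat \<Rightarrow> 'x" and a :: "nat \<Rightarrow> 'a" and b y :: "nat \<Rightarrow> real"
  assume y: "\<forall>t. y t \<in> {0, 1}" and b: "\<forall>t. 0 \<le> b t \<and> b t \<le> M"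
  let ?f = "\<lambda>T. (1 / real T) * (\<Sum>t<T. b t * (fc (history x a b y t) (x t) - y t) - \<bar>b t\<bar> * 0)"
  have le: "norm (?f T) \<le> M * (1 / real T)" for T
  proof -
    have "norm (?f T) = \<bar>\<Sum>t<T. b t * (fc (history x a b y t) (x t) - y t)\<bar> * (1 / real T)"
      by (simp add: abs_mult)
    also have "\<dots> \<le> M * (1 / real T)"
      by (rule mult_right_mono[OF bound[OF y b assms]]) simp
    finally show ?thesis .
  qed
  have "(\<lambda>T. M * (1 / real T)) \<longlonglongrightarrow> 0"
    using tendsto_mult_right_zero[OF lim_const_over_n[of 1]] by simp
  then have "?f \<longlonglongrightarrow> 0"
    by (rule Lim_null_comparison[rotated]) (use le in auto)
  then have "(\<lambda>T. ereal (?f T)) \<longlonglongrightarrow> ereal 0" by (rule tendsto_ereal)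
  then have "limsup (\<lambda>T. ereal (?f T)) = ereal 0"
    by (rule lim_imp_Limsup[OF sequentially_bot])
  then have "limsup (\<lambda>T. ereal (?f T)) = 0"
    by (simp only: zero_ereal_def)
  then show "asymptotically_exact (\<lambda>t. fc (history x a b y t) (x t)) (\<lambda>_. 0) y b"
    unfolding asymptotically_exact_def .
qed

end
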